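(* Let $m\ge2$ and $G=CK(2m-1)$. Every set of edges $B\subset E(G)$ of Class A is a blocker for the simple Hamiltonian paths of $G$.
   Context: $CK(2m-1)$ is the complete convex geometric graph on $2m-1$ points in convex position, labelled clockwise $0,\dots,2m-2$ (elements of $\mathbb{Z}_{2m-1}$; indices mod $2m-1$), with all segments as edges. A simple Hamiltonian path (SHP) is a path through all vertices whose edges pairwise do not cross; a blocker for SHPs is an edge set of smallest possible size (which is $m$) sharing an edge with every SHP. Class A (up to cyclic rotation $x\mapsto x+k$ of labels): sets consisting of the following edges, for integers $\alpha,\delta\ge0$ with $\alpha+\delta\le m-2$: (1) all edges of the boundary path $\langle\alpha,\alpha+1,\dots,m-\delta\rangle$; (2) the edges $[i-1-\epsilon_i,\,i+\epsilon_i]$, $1\le i\le\alpha$, with $\epsilon_1>\dots>\epsilon_\alpha>0$ and $\alpha-i+1\le\epsilon_i\le m-\delta-i-1$; (3) the edges $[m-j-\xi_j,\,m-j+1+\xi_j]$, $1\le j\le\delta$, with $\xi_1>\dots>\xi_\delta>0$ and $\delta+1-j\le\xi_j\le m-j-\alpha-1$; and in addition $\epsilon_1+\xi_1\le m-2$ (when $\alpha,\delta>0$). *)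

theory Defs
  imports Main
begin

text \<open>Vertices of CK(n) are 0..n-1 (clockwise); an edge is a 2-element vertex set.\<close>

definition ck_edges :: "nat \<Rightarrow> nat set set" where
  "ck_edges n = {{a, b} | a b. a < n \<and> b < n \<and> a \<noteq> b}"

text \<open>Two segments of points in convex position cross iff their endpoints interleave.\<close>
definition crosses :: "nat set \<Rightarrow> nat set \<Rightarrow> bool" where
  "crosses e f \<longleftrightarrow> (\<exists>a b c d. {e, f} = {{a, b}, {c, d}} \<and> a < c \<and> c < b \<and> b < d)"

definition path_edges :: "nat list \<Rightarrow> nat set set" where
  "path_edges p = {{p ! i, p ! Suc i} | i. Suc i < length p}"

definition is_SHP :: "nat \<Rightarrow> nat list \<Rightarrow> bool" where
  "is_SHP n p \<longleftrightarrow> distinct p \<and> set p = {0..<n} \<and>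
     (\<forall>e \<in> path_edges p. \<forall>f \<in> path_edges p. \<not> crosses e f)"

definition hits_all_SHP :: "nat \<Rightarrow> nat set set \<Rightarrow> bool" where
  "hits_all_SHP n B \<longleftrightarrow> (\<forall>p. is_SHP n p \<longrightarrow> B \<inter> path_edges p \<noteq> {})"

definition SHP_blocker :: "nat \<Rightarrow> nat set set \<Rightarrow> bool" where
  "SHP_blocker n B \<longleftrightarrow> B \<subseteq> ck_edges n \<and> hits_all_SHP n B \<and>
     (\<forall>B'. B' \<subseteq> ck_edges n \<and> hits_all_SHP n B' \<longrightarrow> card B \<le> card B')"

definition redge :: "nat \<Rightarrow> int \<Rightarrow> int \<Rightarrow> int \<Rightarrow> nat set" where
  "redge n k x y = {nat ((x + k) mod int n), nat ((y + k) mod int n)}"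

definition classA :: "nat \<Rightarrow> nat set set \<Rightarrow> bool" where
  "classA m B \<longleftrightarrow> (\<exists>(k::int) (\<alpha>::nat) (\<delta>::nat) (\<epsilon>::nat \<Rightarrow> int) (\<xi>::nat \<Rightarrow> int).
     let n = 2 * m - 1; M = int m; a = int \<alpha>; d = int \<delta> in
     a + d \<le> M - 2 \<and>
     (\<forall>i j. 1 \<le> i \<and> i < j \<and> j \<le> \<alpha> \<longrightarrow> \<epsilon> j < \<epsilon> i) \<and>
     (\<forall>i. 1 \<le> i \<and> i \<le> \<alpha> \<longrightarrow> 0 < \<epsilon> i \<and> a - int i + 1 \<le> \<epsilon> i \<and> \<epsilon> i \<le> M - d - int i - 1) \<and>
     (\<forall>i j. 1 \<le> i \<and> i < j \<and> j \<le> \<delta> \<longrightarrow> \<xi> j < \<xi> i) \<and>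
     (\<forall>j. 1 \<le> j \<and> j \<le> \<delta> \<longrightarrow> 0 < \<xi> j \<and> d + 1 - int j \<le> \<xi> j \<and> \<xi> j \<le> M - int j - a - 1) \<and>
     (0 < \<alpha> \<and> 0 < \<delta> \<longrightarrow> \<epsilon> 1 + \<xi> 1 \<le> M - 2) \<and>
     B = {redge n k i (i + 1) | i. a \<le> i \<and> i < M - d}
       \<union> {redge n k (int i - 1 - \<epsilon> i) (int i + \<epsilon> i) | i. 1 \<le> i \<and> i \<le> \<alpha>}
       \<union> {redge n k (M - int j - \<xi> j) (M - int j + 1 + \<xi> j) | j. 1 \<le> j \<and> j \<le> \<delta>})"

end

theory Submission
  imports Defs
begin

lemma crosses_sym: "crosses e f = crosses f e"
  unfolding crosses_def by (metis insert_commute)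

lemma crosses_distinct:
  assumes "crosses {x,y} {u,w}"
  shows "x \<noteq> y \<and> u \<noteq> w \<and> u \<notin> {x,y} \<and> w \<notin> {x,y}"
proof -
  obtain a b c d where h: "{{x,y},{u,w}} = {{a,b},{c,d}}" "a < c" "c < b" "b < d"
    using assms unfolding crosses_def by blast
  have ne: "{a,b} \<noteq> {c,d}" using h(2-4) by (auto simp: doubleton_eq_iff)
  from h(1) have "({x,y} = {a,b} \<and> {u,w} = {c,d}) \<or> ({x,y} = {c,d} \<and> {u,w} = {a,b})"
    using ne by (metis doubleton_eq_iff)
  then show ?thesis using h(2-4) by (auto simp: doubleton_eq_iff)
qed

lemma crosses_lin:
  assumes "x < y" "u < w" "u \<notin> {x,y}" "w \<notin> {x,y}"
  shows "crosses {x,y} {u,w} \<longleftrightarrow> ((x < u \<and> u < y) \<noteq> (x < w \<and> w < y))"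
proof
  assume "crosses {x,y} {u,w}"
  then obtain a b c d where h: "{{x,y},{u,w}} = {{a,b},{c,d}}" "a < c" "c < b" "b < d"
    unfolding crosses_def by blast
  have ne: "{a,b} \<noteq> {c,d}" using h(2-4) by (auto simp: doubleton_eq_iff)
  from h(1) have "({x,y} = {a,b} \<and> {u,w} = {c,d}) \<or> ({x,y} = {c,d} \<and> {u,w} = {a,b})"
    using ne by (metis doubleton_eq_iff)
  then show "(x < u \<and> u < y) \<noteq> (x < w \<and> w < y)"
    using h(2-4) assms by (auto simp: doubleton_eq_iff)
next
  assume s: "(x < u \<and> u < y) \<noteq> (x < w \<and> w < y)"
  show "crosses {x,y} {u,w}"
  proof (cases "x < u \<and> u < y")
    case True
    then have "y < w" using s assms by auto
    then show ?thesis unfolding crosses_def using True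
      by (rule_tac x=x in exI, rule_tac x=y in exI, rule_tac x=u in exI, rule_tac x=w in exI) auto
  next
    case False
    then have w: "x < w \<and> w < y" using s by auto
    then have "u < x" using False assms by auto
    then show ?thesis unfolding crosses_def using w
      by (rule_tac x=u in exI, rule_tac x=w in exI, rule_tac x=x in exI, rule_tac x=y in exI) (auto simp: insert_commute)
  qed
qed

lemma crosses_iff:
  assumes "x \<noteq> y" "u \<noteq> w" "u \<notin> {x,y}" "w \<notin> {x,y}"
  shows "crosses {x,y} {u,w} \<longleftrightarrow> ((min x y < u \<and> u < max x y) \<noteq> (min x y < w \<and> w < max x y))"
proof -
  have e1: "{x,y} = {min x y, max x y}" by (auto simp: min_def max_def)
  have e2: "{u,w} = {min u w, max u w}" by (auto simp: min_def max_def)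
  have "crosses {x,y} {u,w} = crosses {min x y, max x y} {min u w, max u w}" using e1 e2 by simp
  also have "\<dots> \<longleftrightarrow> ((min x y < min u w \<and> min u w < max x y) \<noteq> (min x y < max u w \<and> max u w < max x y))"
    by (rule crosses_lin) (use assms in \<open>auto simp: min_def max_def\<close>)
  also have "\<dots> \<longleftrightarrow> ((min x y < u \<and> u < max x y) \<noteq> (min x y < w \<and> w < max x y))"
    by (auto simp: min_def max_def)
  finally show ?thesis .
qed

lemma crosses_gen:
  assumes "x \<noteq> y" "u \<noteq> w" "u \<notin> {x,y}" "w \<notin> {x,y}"
    and "x' \<noteq> y'" "u' \<noteq> w'" "u' \<notin> {x',y'}" "w' \<notin> {x',y'}"
    and "(min x' y' < u' \<and> u' < max x' y') = (f (min x y < u \<and> u < max x y))"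
    and "(min x' y' < w' \<and> w' < max x' y') = (f (min x y < w \<and> w < max x y))"
    and "f = id \<or> f = Not"
  shows "crosses {x',y'} {u',w'} = crosses {x,y} {u,w}"
  using assms(11) by (subst crosses_iff[OF assms(1-4)], subst crosses_iff[OF assms(5-8)],
      auto simp: assms(9,10))

lemma rot1:
  fixes n :: nat
  assumes "a < n" "b < n" "c < n" "d < n"
  shows "crosses {(a+1) mod n, (b+1) mod n} {(c+1) mod n, (d+1) mod n} = crosses {a,b} {c,d}"
proof -
  let ?r = "\<lambda>t. (t+1) mod n"
  have rz: "\<And>z. z < n \<Longrightarrow> ?r z = (if z = n - 1 then 0 else z + 1)"
  proof -
    fix z assume "z < n"
    show "?r z = (if z = n - 1 then 0 else z + 1)"
    proof (cases "z = n - 1")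
      case True then have "z + 1 = n" using \<open>z < n\<close> by simp
      then show ?thesis using True by simp
    next
      case False then have "z + 1 < n" using \<open>z < n\<close> by simp
      then show ?thesis using False by simp
    qed
  qed
  have inj: "\<And>s t. s < n \<Longrightarrow> t < n \<Longrightarrow> ?r s = ?r t \<longleftrightarrow> s = t"
  proof -
    fix s t assume a: "s < n" "t < n"
    show "?r s = ?r t \<longleftrightarrow> s = t" using rz[OF a(1)] rz[OF a(2)] a by (auto split: if_splits)
  qed
  show ?thesis
  proof (cases "a \<noteq> b \<and> c \<noteq> d \<and> c \<notin> {a,b} \<and> d \<notin> {a,b}")
    case False
    then have "\<not> crosses {a,b} {c,d}" using crosses_distinct by blast
    moreover have "\<not> crosses {?r a, ?r b} {?r c, ?r d}"
    proof
      assume "crosses {?r a, ?r b} {?r c, ?r d}"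
      from crosses_distinct[OF this] have "?r a \<noteq> ?r b \<and> ?r c \<noteq> ?r d \<and> ?r c \<notin> {?r a, ?r b} \<and> ?r d \<notin> {?r a, ?r b}" .
      then show False using False inj[OF assms(1) assms(2)] inj[OF assms(3) assms(4)]
         inj[OF assms(3) assms(1)] inj[OF assms(3) assms(2)] inj[OF assms(4) assms(1)] inj[OF assms(4) assms(2)]
        by auto
    qed
    ultimately show ?thesis by simp
  next
    case True
    have rd: "?r a \<noteq> ?r b" "?r c \<noteq> ?r d" "?r c \<notin> {?r a, ?r b}" "?r d \<notin> {?r a, ?r b}"
      using True inj assms by auto
    show ?thesis
    proof (cases "max a b = n - 1")
      case False
      then have ab: "a < n - 1" "b < n - 1" using assms by (auto simp: max_def split: if_splits)
      then have e: "?r a = a + 1" "?r b = b + 1" using rz assms by auto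
      have mm: "min (?r a) (?r b) = min a b + 1" "max (?r a) (?r b) = max a b + 1"
        unfolding e by auto
      have side: "\<And>z. z < n \<Longrightarrow> (min (?r a) (?r b) < ?r z \<and> ?r z < max (?r a) (?r b)) = (min a b < z \<and> z < max a b)"
      proof -
        fix z assume "z < n"
        show "(min (?r a) (?r b) < ?r z \<and> ?r z < max (?r a) (?r b)) = (min a b < z \<and> z < max a b)"
          unfolding mm rz[OF \<open>z < n\<close>] using ab by (auto simp: max_def)
      qed
      show ?thesis
        by (rule crosses_gen[where f=id, OF _ _ _ _ rd]) (use True side assms in auto)
    next
      case mx: True
      have side: "\<And>z. z < n \<Longrightarrow> z \<notin> {a,b} \<Longrightarrow> (min (?r a) (?r b) < ?r z \<and> ?r z < max (?r a) (?r b)) = (\<not> (min a b < z \<and> z < max a b))"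
      proof -
        fix z assume z: "z < n" "z \<notin> {a,b}"
        have mn: "min a b < n - 1" using True mx by (auto simp: min_def max_def)
        have e1: "max (?r a) (?r b) = min a b + 1 \<and> min (?r a) (?r b) = 0"
        proof (cases "a = n - 1")
          case True
          then have "b < n - 1" using \<open>a \<noteq> b \<and> c \<noteq> d \<and> c \<notin> {a, b} \<and> d \<notin> {a, b}\<close> assms by auto
          then show ?thesis using True rz assms by (auto simp: min_def max_def)
        next
          case False
          then have "b = n - 1" "a < n - 1" using mx assms by (auto simp: max_def split: if_splits)
          then show ?thesis using rz assms by (auto simp: min_def max_def)
        qed
        show "(min (?r a) (?r b) < ?r z \<and> ?r z < max (?r a) (?r b)) = (\<not> (min a b < z \<and> z < max a b))"
          unfolding e1[THEN conjunct1] e1[THEN conjunct2] rz[OF z(1)] using z mx mn by (auto simp: min_def max_def split: if_splits)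
      qed
      show ?thesis
        by (rule crosses_gen[where f=Not, OF _ _ _ _ rd]) (use True side assms in auto)
    qed
  qed
qed

definition md :: "nat \<Rightarrow> int \<Rightarrow> nat" where "md n z = nat (z mod int n)"

lemma rots:
  fixes n :: nat
  assumes "a < n" "b < n" "c < n" "d < n"
  shows "crosses {(a+s) mod n, (b+s) mod n} {(c+s) mod n, (d+s) mod n} = crosses {a,b} {c,d}"
proof (induction s)
  case 0
  then show ?case using assms by simp
next
  case (Suc s)
  have n0: "n > 0" using assms by simp
  have e: "\<And>x. (x + Suc s) mod n = ((x + s) mod n + 1) mod n" by (simp add: mod_Suc_eq)
  show ?case unfolding e
    by (subst rot1) (use n0 Suc in auto)
qed

lemma md_window:
  fixes n :: nat and w p :: int
  assumes "w \<le> p" "p < w + int n"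
  shows "md n p = (nat (p - w) + md n w) mod n"
proof -
  have n0: "n > 0" using assms by simp
  have "int ((nat (p - w) + md n w) mod n) = (int (nat (p - w)) + int (md n w)) mod int n"
    by (simp add: zmod_int)
  also have "\<dots> = ((p - w) + w mod int n) mod int n" using assms n0 by (simp add: md_def)
  also have "\<dots> = p mod int n" by (simp add: mod_add_right_eq)
  finally show ?thesis unfolding md_def by (metis nat_int)
qed

lemma window_crosses:
  fixes n :: nat and w p1 p2 p3 p4 :: int
  assumes "w \<le> p1" "p1 < w + int n" "w \<le> p2" "p2 < w + int n"
    "w \<le> p3" "p3 < w + int n" "w \<le> p4" "p4 < w + int n"
  shows "crosses {md n p1, md n p2} {md n p3, md n p4} =
         crosses {nat (p1 - w), nat (p2 - w)} {nat (p3 - w), nat (p4 - w)}"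
  unfolding md_window[OF assms(1,2)] md_window[OF assms(3,4)] md_window[OF assms(5,6)] md_window[OF assms(7,8)]
  by (rule rots) (use assms in auto)

lemma cyc_cross:
  fixes n :: nat and p1 p2 p3 p4 :: int
  assumes "p1 < p2" "p2 < p3" "p3 < p4" "p4 < p1 + int n"
  shows "crosses {md n p1, md n p3} {md n p2, md n p4}"
proof -
  have "crosses {nat (p1 - p1), nat (p3 - p1)} {nat (p2 - p1), nat (p4 - p1)}"
    by (subst crosses_lin) (use assms in auto)
  then show ?thesis by (subst window_crosses[where w=p1]) (use assms in auto)
qed

lemma nest_nocross:
  fixes n :: nat and p1 p2 p3 p4 :: int
  assumes "p1 \<le> p2" "p2 < p3" "p3 \<le> p4" "p4 < p1 + int n"
  shows "\<not> crosses {md n p1, md n p4} {md n p2, md n p3}"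
proof -
  have "\<not> crosses {nat (p1 - p1), nat (p4 - p1)} {nat (p2 - p1), nat (p3 - p1)}"
  proof (cases "p1 = p2 \<or> p3 = p4")
    case True
    then show ?thesis using crosses_distinct by blast
  next
    case False
    then show ?thesis by (subst crosses_lin) (use assms in auto)
  qed
  then show ?thesis by (subst window_crosses[where w=p1]) (use assms in auto)
qed

lemma md_lt: "n > 0 \<Longrightarrow> md n z < n"
  unfolding md_def by (simp add: nat_less_iff)

lemma md_inj_window:
  fixes n :: nat and w s t :: int
  assumes "w \<le> s" "s < w + int n" "w \<le> t" "t < w + int n" "md n s = md n t"
  shows "s = t"
proof -
  have n0: "int n > 0" using assms by simp
  have "s mod int n = t mod int n" using assms(5) n0 unfolding md_def
    by (simp add: eq_nat_nat_iff)
  then have "int n dvd (s - t)" by (simp add: mod_eq_dvd_iff)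
  then obtain q where q: "s - t = int n * q" by (auto simp: dvd_def)
  have b: "- int n < s - t" "s - t < int n" using assms by auto
  have "q = 0"
  proof (rule ccontr)
    assume "q \<noteq> 0"
    then have "q \<ge> 1 \<or> q \<le> -1" by linarith
    then show False
    proof
      assume "q \<ge> 1" then have "int n * q \<ge> int n * 1" using n0 by (intro mult_left_mono) auto
      then show False using q b by linarith
    next
      assume "q \<le> -1" then have "int n * q \<le> int n * (-1)" using n0 by (intro mult_left_mono) auto
      then show False using q b by linarith
    qed
  qed
  then show ?thesis using q by simp
qed

lemma md_shift: "md n (z + int n * q) = md n z"
  unfolding md_def by simp

lemma shp_basic:
  assumes "is_SHP n p"
  shows "distinct p" "length p = n" "set p = {0..<n}"
    "\<forall>e \<in> path_edges p. \<forall>f \<in> path_edges p. \<not> crosses e f"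
proof -
  show d: "distinct p" and s: "set p = {0..<n}" "\<forall>e \<in> path_edges p. \<forall>f \<in> path_edges p. \<not> crosses e f"
    using assms unfolding is_SHP_def by auto
  have "card (set p) = length p" by (rule distinct_card[OF d])
  then show "length p = n" using s by simp
qed

lemma side_const:
  assumes shp: "is_SHP n p" and kk: "Suc k < n" and ij: "Suc k < i" "i < n"
  shows "\<forall>j. i \<le> j \<and> j < n \<longrightarrow>
    ((min (p!k) (p!Suc k) < p!j \<and> p!j < max (p!k) (p!Suc k)) =
     (min (p!k) (p!Suc k) < p!i \<and> p!i < max (p!k) (p!Suc k)))"
proof -
  note dist = shp_basic(1)[OF shp] and len = shp_basic(2)[OF shp] and nc = shp_basic(4)[OF shp]
  have e0: "{p!k, p!Suc k} \<in> path_edges p" unfolding path_edges_def using kk len by blast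
  let ?s = "\<lambda>z. min (p!k) (p!Suc k) < z \<and> z < max (p!k) (p!Suc k)"
  have dn: "\<And>a b. a < n \<Longrightarrow> b < n \<Longrightarrow> a \<noteq> b \<Longrightarrow> p!a \<noteq> p!b"
    using dist len nth_eq_iff_index_eq by metis
  have step: "?s (p!Suc j) = ?s (p!j)" if "i \<le> j" "Suc j < n" for j
  proof -
    have e1: "{p!j, p!Suc j} \<in> path_edges p" unfolding path_edges_def using that len by blast
    have "\<not> crosses {p!k, p!Suc k} {p!j, p!Suc j}" using nc e0 e1 by blast
    moreover have "p!k \<noteq> p!Suc k" "p!j \<noteq> p!Suc j" "p!j \<notin> {p!k, p!Suc k}" "p!Suc j \<notin> {p!k, p!Suc k}"
    proof -
      have a1: "j \<noteq> k" "j \<noteq> Suc k" "Suc j \<noteq> k" "Suc j \<noteq> Suc k" "k \<noteq> Suc k" "j \<noteq> Suc j" using that kk ij by auto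
      have a2: "k < n" "Suc k < n" "j < n" "Suc j < n" using that kk ij by auto
      show "p!k \<noteq> p!Suc k" by (rule dn[OF a2(1) a2(2) a1(5)])
      show "p!j \<noteq> p!Suc j" by (rule dn[OF a2(3) a2(4) a1(6)])
      show "p!j \<notin> {p!k, p!Suc k}" using dn[OF a2(3) a2(1) a1(1)] dn[OF a2(3) a2(2) a1(2)] by blast
      show "p!Suc j \<notin> {p!k, p!Suc k}" using dn[OF a2(4) a2(1) a1(3)] dn[OF a2(4) a2(2) a1(4)] by blast
    qed
    ultimately show ?thesis using crosses_iff[of "p!k" "p!Suc k" "p!j" "p!Suc j"] by blast
  qed
  show ?thesis
  proof (intro allI impI)
    fix j assume "i \<le> j \<and> j < n"
    then show "?s (p!j) = ?s (p!i)"
    proof (induction j)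
      case 0 then show ?case using ij by simp
    next
      case (Suc j)
      show ?case
      proof (cases "i = Suc j")
        case True then show ?thesis by simp
      next
        case False
        then have ij': "i \<le> j" using Suc.prems by simp
        have sj: "Suc j < n" using Suc.prems by simp
        have ih: "?s (p!j) = ?s (p!i)" using Suc.IH ij' sj by simp
        show ?thesis using step[OF ij' sj] ih by (rule trans)
      qed
    qed
  qed
qed

lemma suffix_nocross:
  assumes shp: "is_SHP n p" and kk: "Suc k < n" and ij: "Suc k < i" "i < n" "Suc k < j" "j < n"
  shows "\<not> crosses {p!k, p!Suc k} {p!i, p!j}"
proof
  assume c: "crosses {p!k, p!Suc k} {p!i, p!j}"
  let ?s = "\<lambda>z. min (p!k) (p!Suc k) < z \<and> z < max (p!k) (p!Suc k)"
  have d: "p!k \<noteq> p!Suc k" "p!i \<noteq> p!j" "p!i \<notin> {p!k, p!Suc k}" "p!j \<notin> {p!k, p!Suc k}"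
    using crosses_distinct[OF c] by simp_all
  have ne: "?s (p!i) \<noteq> ?s (p!j)" using crosses_iff[OF d] c by (rule iffD1)
  have "?s (p!i) = ?s (p!j)"
  proof (cases "i \<le> j")
    case True
    have h: "\<forall>j'. i \<le> j' \<and> j' < n \<longrightarrow> ?s (p!j') = ?s (p!i)" by (rule side_const[OF shp kk ij(1,2)])
    have "?s (p!j) = ?s (p!i)" using h[rule_format, of j] True ij(4) by blast
    then show ?thesis by (rule sym)
  next
    case False
    have h: "\<forall>j'. j \<le> j' \<and> j' < n \<longrightarrow> ?s (p!j') = ?s (p!j)" by (rule side_const[OF shp kk ij(3,4)])
    show "?s (p!i) = ?s (p!j)" using h[rule_format, of i] False ij(2) by auto
  qed
  then show False using ne by blast
qed

lemma md_idem: "x < n \<Longrightarrow> md n (int x) = x"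
  unfolding md_def by simp

lemma md_mod: "md n (z mod int n) = md n z"
  unfolding md_def by simp

lemma notin_prefix:
  assumes "distinct p" "Suc k < length p"
  shows "p ! Suc k \<notin> set (take (Suc k) p)"
proof
  assume "p ! Suc k \<in> set (take (Suc k) p)"
  then obtain i where i: "i < length (take (Suc k) p)" "take (Suc k) p ! i = p ! Suc k"
    by (auto simp: in_set_conv_nth)
  then have "i < Suc k" "p ! i = p ! Suc k" using assms by auto
  then show False using assms nth_eq_iff_index_eq[of p i "Suc k"] by auto
qed

lemma in_prefix_idx:
  assumes "u \<in> set p" "u \<notin> set (take (Suc k) p)"
  shows "\<exists>i. Suc k \<le> i \<and> i < length p \<and> p ! i = u"
proof -
  obtain i where i: "i < length p" "p ! i = u" using assms(1) by (auto simp: in_set_conv_nth)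
  have "\<not> i < Suc k"
  proof
    assume "i < Suc k"
    then have "u \<in> set (take (Suc k) p)" using i by (auto simp: in_set_conv_nth intro!: exI[of _ i])
    then show False using assms(2) by simp
  qed
  then show ?thesis using i by (intro exI[of _ i]) auto
qed

lemma gs:
  assumes shp: "is_SHP n p" and kk: "Suc k < n" and ba: "b - a = int k"
    and S: "set (take (Suc k) p) = md n ` {a..b}"
    and x: "p!k = md n a \<or> p!k = md n b"
    and ny: "p!Suc k \<noteq> md n (b+1)"
  shows "p!Suc k = md n (a-1)"
proof (rule ccontr)
  assume na: "p!Suc k \<noteq> md n (a-1)"
  note dist = shp_basic(1)[OF shp] and len = shp_basic(2)[OF shp] and sp = shp_basic(3)[OF shp]
  define y where "y = p!Suc k"
  have yn: "y < n" using sp len kk unfolding y_def by (metis atLeastLessThan_iff nth_mem)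
  have yS: "y \<notin> md n ` {a..b}" using notin_prefix[OF dist] kk len S unfolding y_def by auto
  define z where "z = b + 1 + (int y - b - 1) mod int n"
  have n0: "int n > 0" using kk by simp
  have "0 \<le> (int y - b - 1) mod int n" "(int y - b - 1) mod int n < int n" using n0 by simp_all
  then have zb: "b + 1 \<le> z" "z \<le> b + int n" unfolding z_def by linarith+
  have mz: "md n z = y"
  proof -
    have "z mod int n = (b + 1 + (int y - b - 1)) mod int n" unfolding z_def by (simp add: mod_add_right_eq)
    also have "\<dots> = int y" using yn by simp
    finally show ?thesis unfolding md_def by simp
  qed
  have za: "z < a + int n"
  proof (rule ccontr)
    assume "\<not> z < a + int n"
    then have "z - int n \<in> {a..b}" using zb by auto
    moreover have "md n (z - int n) = y" using md_shift[of n z "-1"] mz by simp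
    ultimately show False using yS by force
  qed
  have z1: "z \<noteq> b + 1" using mz ny unfolding y_def by auto
  have z2: "z \<noteq> a + int n - 1"
  proof
    assume "z = a + int n - 1"
    then have "z = a - 1 + int n * 1" by simp
    then have "md n z = md n (a - 1 + int n * 1)" by simp
    then have "md n z = md n (a - 1)" using md_shift[of n "a - 1" 1] by metis
    then show False using mz na unfolding y_def by simp
  qed
  define u where "u = md n (b+1)"
  define w where "w = md n (a + int n - 1)"
  have w': "w = md n (a - 1)" unfolding w_def using md_shift[of n "a - 1" 1] by (simp add: algebra_simps)
  have uS: "u \<notin> md n ` {a..b}"
  proof
    assume "u \<in> md n ` {a..b}"
    then obtain t where t: "t \<in> {a..b}" "md n (b+1) = md n t" unfolding u_def by auto
    have "b + 1 = t" by (rule md_inj_window[where w=a, OF _ _ _ _ t(2)]) (use t ba kk in auto)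
    then show False using t by auto
  qed
  have wS: "w \<notin> md n ` {a..b}"
  proof
    assume "w \<in> md n ` {a..b}"
    then obtain t where t: "t \<in> {a..b}" "md n (a + int n - 1) = md n t" unfolding w_def by auto
    have "a + int n - 1 = t" by (rule md_inj_window[where w=a, OF _ _ _ _ t(2)]) (use t ba kk in auto)
    then show False using t ba kk by auto
  qed
  have uy: "u \<noteq> y"
  proof
    assume "u = y"
    then have e: "md n (b+1) = md n z" unfolding u_def using mz by simp
    have "b + 1 = z" by (rule md_inj_window[where w="b+1", OF _ _ _ _ e]) (use zb in auto)
    then show False using z1 by simp
  qed
  have wy: "w \<noteq> y"
  proof
    assume "w = y"
    then have e: "md n (a + int n - 1) = md n z" unfolding w_def using mz by simp
    have "a + int n - 1 = z" by (rule md_inj_window[where w="b+1", OF _ _ _ _ e]) (use zb za ba kk in auto)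
    then show False using z2 by simp
  qed
  have uset: "u \<in> set p" "w \<in> set p" using sp md_lt[of n] n0 unfolding u_def w_def by auto
  have uT: "u \<notin> set (take (Suc k) p)" "w \<notin> set (take (Suc k) p)" using uS wS S by auto
  obtain iu where iu: "Suc k \<le> iu" "iu < n" "p!iu = u" using in_prefix_idx[OF uset(1) uT(1)] len by auto
  obtain iw where iw: "Suc k \<le> iw" "iw < n" "p!iw = w" using in_prefix_idx[OF uset(2) uT(2)] len by auto
  have iu': "Suc k < iu" using iu uy unfolding y_def by (metis le_neq_implies_less)
  have iw': "Suc k < iw" using iw wy unfolding y_def by (metis le_neq_implies_less)
  have nc: "\<not> crosses {p!k, y} {u, w}"
    using suffix_nocross[OF shp kk iu' iu(2) iw' iw(2)] iu iw unfolding y_def by simp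
  from x show False
  proof
    assume xa: "p!k = md n a"
    have "crosses {md n (b+1), md n (a + int n - 1)} {md n z, md n (a + int n)}"
      by (rule cyc_cross) (use zb za z1 z2 ba kk in auto)
    moreover have "md n (a + int n) = md n a" using md_shift[of n a 1] by simp
    ultimately have "crosses {u, w} {y, p!k}" unfolding u_def w_def using mz xa by simp
    then have "crosses {p!k, y} {u, w}" using crosses_sym by (metis insert_commute)
    then show False using nc by simp
  next
    assume xb: "p!k = md n b"
    have "crosses {md n b, md n z} {md n (b+1), md n (a + int n - 1)}"
      by (rule cyc_cross) (use zb za z1 z2 ba kk in auto)
    then have "crosses {p!k, y} {u, w}" unfolding u_def w_def using mz xb by simp
    then show False using nc by simp
  qed
qed

fun arc :: "nat \<Rightarrow> nat list \<Rightarrow> nat \<Rightarrow> int \<times> int" where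
  "arc n p 0 = (int (p!0), int (p!0))"
| "arc n p (Suc k) = (if p!Suc k = md n (snd (arc n p k) + 1)
      then (fst (arc n p k), snd (arc n p k) + 1) else (fst (arc n p k) - 1, snd (arc n p k)))"

lemma arc_inv:
  assumes shp: "is_SHP n p"
  shows "k < n \<Longrightarrow> snd (arc n p k) - fst (arc n p k) = int k \<and>
     set (take (Suc k) p) = md n ` {fst (arc n p k)..snd (arc n p k)} \<and>
     (p!k = md n (fst (arc n p k)) \<or> p!k = md n (snd (arc n p k)))"
proof (induction k)
  case 0
  note len = shp_basic(2)[OF shp] and sp = shp_basic(3)[OF shp]
  have p0: "p!0 < n" using sp len 0 by (metis atLeastLessThan_iff nth_mem)
  have t: "take (Suc 0) p = [p!0]" using 0 len by (simp add: take_Suc_conv_app_nth)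
  show ?case using p0 by (simp add: t md_idem)
next
  case (Suc k)
  note len = shp_basic(2)[OF shp]
  obtain a b where ab: "arc n p k = (a, b)" by fastforce
  have IH: "b - a = int k" "set (take (Suc k) p) = md n ` {a..b}" "p!k = md n a \<or> p!k = md n b"
    using Suc ab by auto
  have t: "set (take (Suc (Suc k)) p) = insert (p!Suc k) (set (take (Suc k) p))"
    using Suc.prems len by (auto simp: take_Suc_conv_app_nth)
  show ?case
  proof (cases "p!Suc k = md n (b + 1)")
    case True
    then have a2: "arc n p (Suc k) = (a, b+1)" using ab by simp
    have "{a..b+1} = insert (b+1) {a..b}" using IH(1) by auto
    then show ?thesis unfolding a2 using IH True t by simp
  next
    case False
    then have a2: "arc n p (Suc k) = (a - 1, b)" using ab by simp
    have g: "p!Suc k = md n (a-1)" by (rule gs[OF shp Suc.prems IH False])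
    have "{a-1..b} = insert (a-1) {a..b}" using IH(1) by auto
    then show ?thesis unfolding a2 using IH g t by simp
  qed
qed

definition lp :: "nat \<Rightarrow> (nat \<Rightarrow> int) \<Rightarrow> (nat \<Rightarrow> int) \<Rightarrow> (nat \<Rightarrow> bool) \<Rightarrow> bool" where
  "lp n A B D \<longleftrightarrow> A 0 = B 0 \<and> (\<forall>k. 0 < k \<and> k < n \<longrightarrow>
     (D k \<longrightarrow> A k = A (k-1) \<and> B k = B (k-1) + 1) \<and> (\<not> D k \<longrightarrow> A k = A (k-1) - 1 \<and> B k = B (k-1)))"

definition VV :: "(nat \<Rightarrow> int) \<Rightarrow> (nat \<Rightarrow> int) \<Rightarrow> (nat \<Rightarrow> bool) \<Rightarrow> nat \<Rightarrow> int" where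
  "VV A B D k = (if k = 0 then A 0 else if D k then B k else A k)"

lemma SHP_lp:
  assumes shp: "is_SHP n p"
  shows "\<exists>A B D. lp n A B D \<and> (\<forall>k<n. p!k = md n (VV A B D k))"
proof -
  define A where "A = (\<lambda>k. fst (arc n p k))"
  define B where "B = (\<lambda>k. snd (arc n p k))"
  define D where "D = (\<lambda>k. p!k = md n (B (k-1) + 1))"
  have "lp n A B D" unfolding lp_def
    apply (intro conjI)
     apply (simp add: A_def B_def)
    apply (intro allI impI)
    subgoal for k by (cases k) (auto simp: A_def B_def D_def)
    done
  moreover have "\<forall>k<n. p!k = md n (VV A B D k)"
  proof (intro allI impI)
    fix k assume k: "k < n"
    show "p!k = md n (VV A B D k)"
    proof (cases k)
      case 0
      note len = shp_basic(2)[OF shp] and sp = shp_basic(3)[OF shp]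
      have p0: "p!0 < n" using sp len k 0 by (metis atLeastLessThan_iff nth_mem)
      then show ?thesis using 0 unfolding VV_def A_def by (simp add: md_idem)
    next
      case (Suc j)
      have I: "snd (arc n p j) - fst (arc n p j) = int j"
        "set (take (Suc j) p) = md n ` {fst (arc n p j)..snd (arc n p j)}"
        "p!j = md n (fst (arc n p j)) \<or> p!j = md n (snd (arc n p j))"
        using arc_inv[OF shp, of j] k Suc by auto
      show ?thesis
      proof (cases "D k")
        case True
        then show ?thesis unfolding VV_def using Suc unfolding D_def B_def by simp
      next
        case False
        then have ne: "p!Suc j \<noteq> md n (snd (arc n p j) + 1)" unfolding D_def B_def Suc by simp
        have "p!Suc j = md n (fst (arc n p j) - 1)" by (rule gs[OF shp _ I ne]) (use k Suc in simp)
        then show ?thesis unfolding VV_def using Suc False ne unfolding A_def by simp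
      qed
    qed
  qed
  ultimately show ?thesis by blast
qed

definition cond :: "int \<Rightarrow> nat \<Rightarrow> nat \<Rightarrow> (nat \<Rightarrow> int) \<Rightarrow> (nat \<Rightarrow> int) \<Rightarrow> bool" where
  "cond M \<alpha> \<delta> \<epsilon> \<xi> \<longleftrightarrow> int \<alpha> + int \<delta> \<le> M - 2 \<and>
     (\<forall>i j. 1 \<le> i \<and> i < j \<and> j \<le> \<alpha> \<longrightarrow> \<epsilon> j < \<epsilon> i) \<and>
     (\<forall>i. 1 \<le> i \<and> i \<le> \<alpha> \<longrightarrow> 0 < \<epsilon> i \<and> int \<alpha> - int i + 1 \<le> \<epsilon> i \<and> \<epsilon> i \<le> M - int \<delta> - int i - 1) \<and>
     (\<forall>i j. 1 \<le> i \<and> i < j \<and> j \<le> \<delta> \<longrightarrow> \<xi> j < \<xi> i) \<and>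
     (\<forall>j. 1 \<le> j \<and> j \<le> \<delta> \<longrightarrow> 0 < \<xi> j \<and> int \<delta> + 1 - int j \<le> \<xi> j \<and> \<xi> j \<le> M - int j - int \<alpha> - 1) \<and>
     (0 < \<alpha> \<and> 0 < \<delta> \<longrightarrow> \<epsilon> 1 + \<xi> 1 \<le> M - 2)"

lemma chain:
  fixes T :: "int \<Rightarrow> int" and M :: int
  assumes c: "cond M \<alpha> \<delta> \<epsilon> \<xi>"
    and T2: "T (int \<alpha> + 1) \<ge> 2"
    and Tinc: "\<forall>y. int \<alpha> + 1 \<le> y \<and> y < M - int \<delta> - 1 \<longrightarrow> T (y+1) \<ge> T y + 2"
    and Tend: "T (M - int \<delta> - 1) \<le> 2*M - 4"
    and Tc: "\<forall>i. 1 \<le> i \<and> i \<le> \<alpha> \<longrightarrow> T (int i + \<epsilon> i) \<noteq> 2 * \<epsilon> i \<and> T (int i + \<epsilon> i) \<noteq> 2 * \<epsilon> i + 1"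
    and Td: "\<forall>j. 1 \<le> j \<and> j \<le> \<delta> \<longrightarrow> T (M - int j - \<xi> j) \<noteq> 2*M - 2 - 2 * \<xi> j \<and> T (M - int j - \<xi> j) \<noteq> 2*M - 3 - 2 * \<xi> j"
  shows False
proof -
  let ?lo = "int \<alpha> + 1" and ?hi = "M - int \<delta> - 1"
  note cd = c[unfolded cond_def]
  have ad: "int \<alpha> + int \<delta> \<le> M - 2" using cd by blast
  have ed: "\<And>i j. 1 \<le> i \<Longrightarrow> i < j \<Longrightarrow> j \<le> \<alpha> \<Longrightarrow> \<epsilon> j < \<epsilon> i" using cd by blast
  have eb: "\<And>i. 1 \<le> i \<Longrightarrow> i \<le> \<alpha> \<Longrightarrow> 0 < \<epsilon> i \<and> int \<alpha> - int i + 1 \<le> \<epsilon> i \<and> \<epsilon> i \<le> M - int \<delta> - int i - 1"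
    using cd by blast
  have xd: "\<And>i j. 1 \<le> i \<Longrightarrow> i < j \<Longrightarrow> j \<le> \<delta> \<Longrightarrow> \<xi> j < \<xi> i" using cd by blast
  have xb: "\<And>j. 1 \<le> j \<Longrightarrow> j \<le> \<delta> \<Longrightarrow> 0 < \<xi> j \<and> int \<delta> + 1 - int j \<le> \<xi> j \<and> \<xi> j \<le> M - int j - int \<alpha> - 1"
    using cd by blast
  have ex: "0 < \<alpha> \<Longrightarrow> 0 < \<delta> \<Longrightarrow> \<epsilon> 1 + \<xi> 1 \<le> M - 2" using cd by blast
  have mono: "T y' - 2*y' \<ge> T y - 2*y" if "?lo \<le> y" "y \<le> y'" "y' \<le> ?hi" for y y'
  proof -
    have "\<forall>y'. y \<le> y' \<and> y' \<le> ?hi \<and> nat (y' - y) = d \<longrightarrow> T y' - 2*y' \<ge> T y - 2*y" for d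
    proof (induction d)
      case 0 then show ?case by auto
    next
      case (Suc d)
      show ?case
      proof (intro allI impI)
        fix y' assume h: "y \<le> y' \<and> y' \<le> ?hi \<and> nat (y' - y) = Suc d"
        have h2: "y \<le> y' - 1" "y' - 1 \<le> ?hi" "nat (y' - 1 - y) = d" using h by auto
        have "T (y' - 1) - 2*(y'-1) \<ge> T y - 2*y" using Suc.IH h2 by blast
        moreover have "T y' \<ge> T (y'-1) + 2" using Tinc[rule_format, of "y'-1"] h that by auto
        ultimately show "T y' - 2*y' \<ge> T y - 2*y" by (simp add: algebra_simps)
      qed
    qed
    then show ?thesis using that by blast
  qed
  have C1: "T (int i + \<epsilon> i) \<ge> 2 * \<epsilon> i + 2" if "1 \<le> i" "i \<le> \<alpha>" for i
    using that(2,1)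
  proof (induction i rule: inc_induct)
    case base
    have b: "?lo \<le> int \<alpha> + \<epsilon> \<alpha>" "int \<alpha> + \<epsilon> \<alpha> \<le> ?hi" using eb[of \<alpha>] base by auto
    have "T (int \<alpha> + \<epsilon> \<alpha>) \<ge> 2 * \<epsilon> \<alpha>" using mono[OF _ b(1) b(2)] T2 by simp
    then show ?case using Tc[rule_format, of \<alpha>] base by auto
  next
    case (step i)
    have e: "\<epsilon> (Suc i) < \<epsilon> i" using ed[of i "Suc i"] step by auto
    have b: "?lo \<le> int (Suc i) + \<epsilon> (Suc i)" "int (Suc i) + \<epsilon> (Suc i) \<le> int i + \<epsilon> i"
       "int i + \<epsilon> i \<le> ?hi" using eb[of i] eb[of "Suc i"] step e by auto
    have "T (int i + \<epsilon> i) \<ge> 2 * \<epsilon> i" using mono[OF b] step e by simp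
    then show ?case using Tc[rule_format, of i] step by auto
  qed
  have C2: "T (M - int j - \<xi> j) \<ge> 2*M - 1 - 2 * \<xi> j" if "1 \<le> j" "j \<le> \<delta>" for j
    using that
  proof (induction j rule: dec_induct)
    case base
    have b: "?lo \<le> M - 1 - \<xi> 1" "M - 1 - \<xi> 1 \<le> ?hi" using xb[of 1] base by auto
    have "T (M - 1 - \<xi> 1) \<ge> 2*M - 2 - 2 * \<xi> 1"
    proof (cases "\<alpha> = 0")
      case True
      then show ?thesis using mono[OF _ b] T2 by simp
    next
      case False
      have b2: "?lo \<le> 1 + \<epsilon> 1" "1 + \<epsilon> 1 \<le> M - 1 - \<xi> 1" using eb[of 1] ex base False by auto
      have "T (1 + \<epsilon> 1) \<ge> 2 * \<epsilon> 1 + 2" using C1[of 1] False by simp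
      then show ?thesis using mono[OF b2 b(2)] by simp
    qed
    then show ?case using Td[rule_format, of 1] base by auto
  next
    case (step j)
    have e: "\<xi> (Suc j) < \<xi> j" using xd[of j "Suc j"] step by auto
    have b: "?lo \<le> M - int j - \<xi> j" "M - int j - \<xi> j \<le> M - int (Suc j) - \<xi> (Suc j)"
       "M - int (Suc j) - \<xi> (Suc j) \<le> ?hi" using xb[of j] xb[of "Suc j"] step e by auto
    have "T (M - int (Suc j) - \<xi> (Suc j)) \<ge> 2*M - 3 - 2 * \<xi> (Suc j)" using mono[OF b] step e by simp
    then show ?case using Td[rule_format, of "Suc j"] step by auto
  qed
  have "T ?hi \<ge> 2*M - 3"
  proof (cases "\<delta> = 0")
    case False
    have b: "?lo \<le> M - int \<delta> - \<xi> \<delta>" "M - int \<delta> - \<xi> \<delta> \<le> ?hi" using xb[of \<delta>] False by auto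
    show ?thesis using mono[OF b order.refl] C2[of \<delta>] False by simp
  next
    case d0: True
    show ?thesis
    proof (cases "\<alpha> = 0")
      case True
      have "?lo \<le> ?hi" using ad by auto
      then show ?thesis using mono[OF order.refl _ order.refl] T2 d0 True by simp
    next
      case False
      have b: "?lo \<le> 1 + \<epsilon> 1" "1 + \<epsilon> 1 \<le> ?hi" using eb[of 1] False by auto
      show ?thesis using mono[OF b order.refl] C1[of 1] False d0 by simp
    qed
  qed
  then show False using Tend by simp
qed

definition prs :: "int \<Rightarrow> nat \<Rightarrow> nat \<Rightarrow> (nat \<Rightarrow> int) \<Rightarrow> (nat \<Rightarrow> int) \<Rightarrow> (int \<times> int) set" where
  "prs M \<alpha> \<delta> \<epsilon> \<xi> = {(i, i+1) | i. int \<alpha> \<le> i \<and> i < M - int \<delta>}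
     \<union> {(int i - 1 - \<epsilon> i, int i + \<epsilon> i) | i. 1 \<le> i \<and> i \<le> \<alpha>}
     \<union> {(M - int j - \<xi> j, M - int j + 1 + \<xi> j) | j. 1 \<le> j \<and> j \<le> \<delta>}"

definition hits :: "nat \<Rightarrow> (int \<times> int) set \<Rightarrow> (nat \<Rightarrow> int) \<Rightarrow> bool" where
  "hits n P V \<longleftrightarrow> (\<exists>k x y. 0 < k \<and> k < n \<and> (x,y) \<in> P \<and>
     ((V (k-1) mod int n = x mod int n \<and> V k mod int n = y mod int n) \<or>
      (V (k-1) mod int n = y mod int n \<and> V k mod int n = x mod int n)))"

lemma hitI1: "0 < k \<Longrightarrow> k < n \<Longrightarrow> (x,y) \<in> P \<Longrightarrow> V (k-1) = x + int n * q1 \<Longrightarrow> V k = y + int n * q2 \<Longrightarrow> hits n P V"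
  unfolding hits_def by (rule exI[of _ k], rule exI[of _ x], rule exI[of _ y]) simp

lemma hitI2: "0 < k \<Longrightarrow> k < n \<Longrightarrow> (x,y) \<in> P \<Longrightarrow> V (k-1) = y + int n * q1 \<Longrightarrow> V k = x + int n * q2 \<Longrightarrow> hits n P V"
  unfolding hits_def by (rule exI[of _ k], rule exI[of _ x], rule exI[of _ y]) simp

lemma gapP: "int \<alpha> \<le> i \<Longrightarrow> i < M - int \<delta> \<Longrightarrow> (i, i+1) \<in> prs M \<alpha> \<delta> \<epsilon> \<xi>"
  unfolding prs_def by blast

lemma cP: "1 \<le> i \<Longrightarrow> i \<le> \<alpha> \<Longrightarrow> (int i - 1 - \<epsilon> i, int i + \<epsilon> i) \<in> prs M \<alpha> \<delta> \<epsilon> \<xi>"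
  unfolding prs_def by blast

lemma dP: "1 \<le> j \<Longrightarrow> j \<le> \<delta> \<Longrightarrow> (M - int j - \<xi> j, M - int j + 1 + \<xi> j) \<in> prs M \<alpha> \<delta> \<epsilon> \<xi>"
  unfolding prs_def by blast

lemma gap_hit:
  assumes "0 < k" "k < n" "int \<alpha> \<le> i" "i < M - int \<delta>"
    "(V (k-1) = i + int n * q1 \<and> V k = i + 1 + int n * q2) \<or> (V (k-1) = i + 1 + int n * q1 \<and> V k = i + int n * q2)"
  shows "hits n (prs M \<alpha> \<delta> \<epsilon> \<xi>) V"
  using assms(5) hitI1[OF assms(1,2) gapP[OF assms(3,4)]] hitI2[OF assms(1,2) gapP[OF assms(3,4)]] by blast

lemma lp_step:
  assumes "lp n A B D" "0 < k" "k < n"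
  shows "D k \<Longrightarrow> A k = A (k-1) \<and> B k = B (k-1) + 1" "\<not> D k \<Longrightarrow> A k = A (k-1) - 1 \<and> B k = B (k-1)"
  using assms unfolding lp_def by blast+

lemma lp_diff:
  assumes "lp n A B D"
  shows "k < n \<Longrightarrow> B k - A k = int k"
proof (induction k)
  case 0 then show ?case using assms unfolding lp_def by simp
next
  case (Suc k)
  then show ?case using lp_step[OF assms, of "Suc k"] by (cases "D (Suc k)") auto
qed

lemma lp_Bmono:
  assumes "lp n A B D"
  shows "k \<le> k' \<Longrightarrow> k' < n \<Longrightarrow> B k \<le> B k'"
proof (induction k' rule: dec_induct)
  case base then show ?case by simp
next
  case (step j)
  then show ?case using lp_step[OF assms, of "Suc j"] by (cases "D (Suc j)") auto
qed

lemma VV_simps: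
  "VV A B D 0 = A 0" "0 < k \<Longrightarrow> D k \<Longrightarrow> VV A B D k = B k" "0 < k \<Longrightarrow> \<not> D k \<Longrightarrow> VV A B D k = A k"
  unfolding VV_def by auto

lemma case1:
  fixes A B :: "nat \<Rightarrow> int" and M :: int
  assumes c: "cond M \<alpha> \<delta> \<epsilon> \<xi>" and nM: "int n = 2*M - 1"
    and L: "lp n A B D" and nh: "\<not> hits n (prs M \<alpha> \<delta> \<epsilon> \<xi>) (VV A B D)"
    and A0: "A 0 \<le> int n + int \<alpha>" and Bf: "B (n-1) \<ge> int n + M - int \<delta> - 1"
  shows False
proof -
  define N where "N = int n"
  note cd = c[unfolded cond_def]
  have ad: "int \<alpha> + int \<delta> \<le> M - 2" using cd by blast
  have eb: "\<And>i. 1 \<le> i \<Longrightarrow> i \<le> \<alpha> \<Longrightarrow> 0 < \<epsilon> i \<and> int \<alpha> - int i + 1 \<le> \<epsilon> i \<and> \<epsilon> i \<le> M - int \<delta> - int i - 1"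
    using cd by blast
  have xb: "\<And>j. 1 \<le> j \<Longrightarrow> j \<le> \<delta> \<Longrightarrow> 0 < \<xi> j \<and> int \<delta> + 1 - int j \<le> \<xi> j \<and> \<xi> j \<le> M - int j - int \<alpha> - 1"
    using cd by blast
  have n3: "n \<ge> 3" using nM ad by linarith
  let ?V = "VV A B D" and ?P = "prs M \<alpha> \<delta> \<epsilon> \<xi>"
  have AB0: "A 0 = B 0" using L unfolding lp_def by blast
  have ex: "\<exists>t. 0 < t \<and> t < n \<and> B t = y \<and> B (t-1) = y - 1 \<and> D t"
    if y: "N + int \<alpha> + 1 \<le> y" "y \<le> N + M - int \<delta> - 1" for y
  proof -
    define t where "t = (LEAST k. y \<le> B k)"
    have "y \<le> B (n-1)" using Bf y unfolding N_def by simp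
    then have t1: "y \<le> B t" and t2: "t \<le> n - 1" unfolding t_def by (auto intro: LeastI Least_le)
    have t0: "t \<noteq> 0"
    proof
      assume "t = 0"
      then have "y \<le> A 0" using t1 AB0 by simp
      then show False using A0 y unfolding N_def by linarith
    qed
    have t3: "\<not> y \<le> B (t-1)" unfolding t_def by (rule not_less_Least) (use t0 t_def in auto)
    have ttn: "0 < t" "t < n" using t0 t2 n3 by auto
    show ?thesis
    proof (cases "D t")
      case True
      then show ?thesis using lp_step(1)[OF L ttn] t1 t3 ttn by (intro exI[of _ t]) auto
    next
      case False
      then show ?thesis using lp_step(2)[OF L ttn] t1 t3 by auto
    qed
  qed
  define tt where "tt = (\<lambda>y. SOME t. 0 < t \<and> t < n \<and> B t = y \<and> B (t-1) = y - 1 \<and> D t)"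
  have ttp: "0 < tt y \<and> tt y < n \<and> B (tt y) = y \<and> B (tt y - 1) = y - 1 \<and> D (tt y)"
    if "N + int \<alpha> + 1 \<le> y" "y \<le> N + M - int \<delta> - 1" for y
    unfolding tt_def by (rule someI_ex[OF ex[OF that]])
  have key: "2 \<le> tt y \<and> tt y + 1 < n \<and> A (tt y) = y - int (tt y) \<and> ?V (tt y - 1) = y - int (tt y) \<and>
     ?V (tt y) = y \<and> ?V (tt y + 1) = y - int (tt y) - 1 \<and> B (tt y + 1) = y"
    if y: "N + int \<alpha> + 1 \<le> y" "y \<le> N + M - int \<delta> - 1" for y
  proof -
    define t where "t = tt y"
    have tp: "0 < t" "t < n" "B t = y" "B (t-1) = y - 1" "D t" using ttp[OF y] unfolding t_def by auto
    have At: "A t = y - int t" using lp_diff[OF L tp(2)] tp(3) by simp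
    have Vt: "?V t = y" using VV_simps(2)[of t D A B, OF tp(1) tp(5)] tp(3) by simp
    have At1: "A (t-1) = A t" using lp_step(1)[OF L tp(1,2,5)] by simp
    have k1: "2 \<le> t \<and> \<not> D (t-1)"
    proof (rule ccontr)
      assume a: "\<not> (2 \<le> t \<and> \<not> D (t-1))"
      have "?V (t-1) = y - 1"
      proof (cases "t = 1")
        case True
        then show ?thesis using VV_simps(1) AB0 tp(4) by simp
      next
        case False
        then have "0 < t - 1" "D (t-1)" using a tp(1) by auto
        then show ?thesis using VV_simps(2)[of "t-1" D A B] tp(4) by simp
      qed
      then have "hits n ?P ?V"
        by (intro gap_hit[OF tp(1,2), of \<alpha> "y - 1 - N" M \<delta> ?V 1 1]) (use y Vt in \<open>auto simp: N_def\<close>)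
      then show False using nh by simp
    qed
    have Vt1: "?V (t-1) = y - int t" using VV_simps(3)[of "t-1" D A B] k1 At1 At by simp
    have k2a: "t + 1 < n"
    proof (rule ccontr)
      assume "\<not> t + 1 < n"
      then have "t = n - 1" using tp(2) by simp
      then have "?V (t-1) = y - N + 1" using Vt1 n3 unfolding N_def by simp
      then have "hits n ?P ?V"
        by (intro gap_hit[OF tp(1,2), of \<alpha> "y - N" M \<delta> ?V 0 1]) (use y Vt in \<open>auto simp: N_def\<close>)
      then show False using nh by simp
    qed
    have k2b: "\<not> D (t+1)"
    proof
      assume d: "D (t+1)"
      have "?V (t+1) = y + 1" using VV_simps(2)[of "t+1" D A B] d lp_step(1)[OF L _ k2a d] tp(3) by simp
      then have "hits n ?P ?V"
        by (intro gap_hit[of "t+1" n \<alpha> "y - N" M \<delta> ?V 1 1]) (use y Vt k2a in \<open>auto simp: N_def\<close>)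
      then show False using nh by simp
    qed
    have st: "A (t+1) = A t - 1 \<and> B (t+1) = B t" using lp_step(2)[OF L _ k2a k2b] by simp
    have Vt2: "?V (t+1) = y - int t - 1" using VV_simps(3)[of "t+1" D A B] k2b st At by simp
    show ?thesis using k1 k2a At Vt1 Vt Vt2 st tp(3) unfolding t_def by simp
  qed
  define T where "T = (\<lambda>y'. int (tt (N + y')))"
  have rng: "N + int \<alpha> + 1 \<le> N + y'" "N + y' \<le> N + M - int \<delta> - 1"
    if "int \<alpha> + 1 \<le> y'" "y' \<le> M - int \<delta> - 1" for y' using that by auto
  have T2: "T (int \<alpha> + 1) \<ge> 2" using key[of "N + int \<alpha> + 1"] ad unfolding T_def by (simp add: add.assoc)
  have Tinc: "\<forall>y. int \<alpha> + 1 \<le> y \<and> y < M - int \<delta> - 1 \<longrightarrow> T (y+1) \<ge> T y + 2"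
  proof (intro allI impI)
    fix y' assume h: "int \<alpha> + 1 \<le> y' \<and> y' < M - int \<delta> - 1"
    have k: "tt (N + y') + 1 < n" "B (tt (N + y') + 1) = N + y'" using key[OF rng[of y']] h by auto
    have p: "B (tt (N + (y'+1))) = N + y' + 1" "tt (N + (y'+1)) < n" using ttp[OF rng[of "y'+1"]] h by auto
    have "tt (N + y') + 2 \<le> tt (N + (y'+1))"
    proof (rule ccontr)
      assume "\<not> tt (N + y') + 2 \<le> tt (N + (y'+1))"
      then have "B (tt (N + (y'+1))) \<le> B (tt (N + y') + 1)" using lp_Bmono[OF L _ k(1)] by simp
      then show False using k p by simp
    qed
    then show "T (y'+1) \<ge> T y' + 2" unfolding T_def by simp
  qed
  have Tend: "T (M - int \<delta> - 1) \<le> 2*M - 4"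
  proof -
    define y where "y = N + (M - int \<delta> - 1)"
    define t where "t = tt y"
    have k: "2 \<le> t" "t + 1 < n" "?V t = y" "?V (t + 1) = y - int t - 1"
      using key[of y] ad unfolding y_def t_def by auto
    have "t + 2 < n"
    proof (rule ccontr)
      assume "\<not> t + 2 < n"
      then have tn: "int t = N - 2" using k(2) unfolding N_def by simp
      have "hits n ?P ?V"
        by (rule gap_hit[of "t+1" n \<alpha> "M - int \<delta> - 1" M \<delta> ?V 1 0]) (use k tn ad in \<open>auto simp: y_def N_def\<close>)
      then show False using nh by simp
    qed
    then show ?thesis unfolding T_def t_def y_def using nM by simp
  qed
  have Tc: "\<forall>i. 1 \<le> i \<and> i \<le> \<alpha> \<longrightarrow> T (int i + \<epsilon> i) \<noteq> 2 * \<epsilon> i \<and> T (int i + \<epsilon> i) \<noteq> 2 * \<epsilon> i + 1"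
  proof (intro allI impI)
    fix i assume i: "1 \<le> i \<and> i \<le> \<alpha>"
    define y where "y = N + (int i + \<epsilon> i)"
    define t where "t = tt y"
    have r: "N + int \<alpha> + 1 \<le> y" "y \<le> N + M - int \<delta> - 1" using eb[of i] i unfolding y_def by auto
    have k: "2 \<le> t" "t + 1 < n" "?V (t - 1) = y - int t" "?V t = y" "?V (t + 1) = y - int t - 1"
      using key[OF r] unfolding t_def by auto
    have m: "(int i - 1 - \<epsilon> i, int i + \<epsilon> i) \<in> ?P" using cP i by blast
    show "T (int i + \<epsilon> i) \<noteq> 2 * \<epsilon> i \<and> T (int i + \<epsilon> i) \<noteq> 2 * \<epsilon> i + 1"
    proof (intro conjI notI)
      assume "T (int i + \<epsilon> i) = 2 * \<epsilon> i"
      then have tv: "int t = 2 * \<epsilon> i" unfolding T_def t_def y_def by simp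
      have "hits n ?P ?V"
        by (rule hitI2[of "t+1" n _ _ ?P ?V 1 1, OF _ k(2) m]) (use k tv in \<open>auto simp: y_def N_def\<close>)
      then show False using nh by simp
    next
      assume "T (int i + \<epsilon> i) = 2 * \<epsilon> i + 1"
      then have tv: "int t = 2 * \<epsilon> i + 1" unfolding T_def t_def y_def by simp
      have "hits n ?P ?V"
        by (rule hitI1[of t n _ _ ?P ?V 1 1, OF _ _ m]) (use k tv in \<open>auto simp: y_def N_def\<close>)
      then show False using nh by simp
    qed
  qed
  have Td: "\<forall>j. 1 \<le> j \<and> j \<le> \<delta> \<longrightarrow> T (M - int j - \<xi> j) \<noteq> 2*M - 2 - 2 * \<xi> j \<and> T (M - int j - \<xi> j) \<noteq> 2*M - 3 - 2 * \<xi> j"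
  proof (intro allI impI)
    fix j assume j: "1 \<le> j \<and> j \<le> \<delta>"
    define y where "y = N + (M - int j - \<xi> j)"
    define t where "t = tt y"
    have r: "N + int \<alpha> + 1 \<le> y" "y \<le> N + M - int \<delta> - 1" using xb[of j] j unfolding y_def by auto
    have k: "2 \<le> t" "t + 1 < n" "?V (t - 1) = y - int t" "?V t = y" "?V (t + 1) = y - int t - 1"
      using key[OF r] unfolding t_def by auto
    have m: "(M - int j - \<xi> j, M - int j + 1 + \<xi> j) \<in> ?P" using dP j by blast
    show "T (M - int j - \<xi> j) \<noteq> 2*M - 2 - 2 * \<xi> j \<and> T (M - int j - \<xi> j) \<noteq> 2*M - 3 - 2 * \<xi> j"
    proof (intro conjI notI)
      assume "T (M - int j - \<xi> j) = 2*M - 2 - 2 * \<xi> j"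
      then have tv: "int t = 2*M - 2 - 2 * \<xi> j" unfolding T_def t_def y_def by simp
      have "hits n ?P ?V"
        by (rule hitI2[of t n _ _ ?P ?V 0 1, OF _ _ m]) (use k tv nM in \<open>auto simp: y_def N_def\<close>)
      then show False using nh by simp
    next
      assume "T (M - int j - \<xi> j) = 2*M - 3 - 2 * \<xi> j"
      then have tv: "int t = 2*M - 3 - 2 * \<xi> j" unfolding T_def t_def y_def by simp
      have "hits n ?P ?V"
        by (rule hitI1[of "t+1" n _ _ ?P ?V 1 0, OF _ k(2) m]) (use k tv nM in \<open>auto simp: y_def N_def\<close>)
      then show False using nh by simp
    qed
  qed
  show False by (rule chain[OF c T2 Tinc Tend Tc Td])
qed

lemma hits_shift: "hits n P (\<lambda>k. V k + int n * q) \<Longrightarrow> hits n P V"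
  unfolding hits_def by simp

lemma lp_shift: "lp n A B D \<Longrightarrow> lp n (\<lambda>k. A k + c) (\<lambda>k. B k + c) D"
  unfolding lp_def by auto

lemma VV_shift: "VV (\<lambda>k. A k + c) (\<lambda>k. B k + c) D = (\<lambda>k. VV A B D k + c)"
  unfolding VV_def by auto

lemma lp_refl: "lp n A B D \<Longrightarrow> lp n (\<lambda>k. c - B k) (\<lambda>k. c - A k) (\<lambda>k. \<not> D k)"
  unfolding lp_def by auto

lemma VV_refl0: "A 0 = B 0 \<Longrightarrow> VV (\<lambda>k. c - B k) (\<lambda>k. c - A k) (\<lambda>k. \<not> D k) = (\<lambda>k. c - VV A B D k)"
  unfolding VV_def by auto

lemma cond_refl: "cond M \<alpha> \<delta> \<epsilon> \<xi> \<Longrightarrow> cond M \<delta> \<alpha> \<xi> \<epsilon>"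
  unfolding cond_def by (auto simp: algebra_simps)

lemma prs_refl:
  assumes "(x,y) \<in> prs M \<delta> \<alpha> \<xi> \<epsilon>"
  shows "(M - y, M - x) \<in> prs M \<alpha> \<delta> \<epsilon> \<xi>"
proof -
  from assms consider (g) i where "x = i" "y = i + 1" "int \<delta> \<le> i" "i < M - int \<alpha>"
    | (c) i where "x = int i - 1 - \<xi> i" "y = int i + \<xi> i" "1 \<le> i" "i \<le> \<delta>"
    | (d) j where "x = M - int j - \<epsilon> j" "y = M - int j + 1 + \<epsilon> j" "1 \<le> j" "j \<le> \<alpha>"
    unfolding prs_def by blast
  then show ?thesis
  proof cases
    case g
    have e: "(M - y, M - x) = (M - i - 1, (M - i - 1) + 1)" using g by simp
    have "(M - i - 1, (M - i - 1) + 1) \<in> prs M \<alpha> \<delta> \<epsilon> \<xi>" by (rule gapP) (use g in auto)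
    then show ?thesis using e by metis
  next
    case c
    have e: "(M - y, M - x) = (M - int i - \<xi> i, M - int i + 1 + \<xi> i)" using c by (simp add: algebra_simps)
    then show ?thesis using dP[of i \<delta> M \<xi> \<alpha> \<epsilon>] c by metis
  next
    case d
    have e: "(M - y, M - x) = (int j - 1 - \<epsilon> j, int j + \<epsilon> j)" using d by (simp add: algebra_simps)
    then show ?thesis using cP[of j \<alpha> \<epsilon> M \<delta> \<xi>] d by metis
  qed
qed

lemma mod_refl:
  fixes c v x M N :: int
  assumes "(c - v) mod N = x mod N" "c mod N = M mod N"
  shows "v mod N = (M - x) mod N"
proof -
  have "v mod N = (c - (c - v)) mod N" by simp
  also have "\<dots> = (c mod N - (c - v) mod N) mod N" by (simp add: mod_diff_eq)
  also have "\<dots> = (M mod N - x mod N) mod N" using assms by simp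
  also have "\<dots> = (M - x) mod N" by (simp add: mod_diff_eq)
  finally show ?thesis .
qed

lemma hits_refl:
  assumes "hits n (prs M \<delta> \<alpha> \<xi> \<epsilon>) (\<lambda>k. c - V k)" "c mod int n = M mod int n"
  shows "hits n (prs M \<alpha> \<delta> \<epsilon> \<xi>) V"
proof -
  obtain k x y where h: "0 < k" "k < n" "(x,y) \<in> prs M \<delta> \<alpha> \<xi> \<epsilon>"
    "((c - V (k-1)) mod int n = x mod int n \<and> (c - V k) mod int n = y mod int n) \<or>
     ((c - V (k-1)) mod int n = y mod int n \<and> (c - V k) mod int n = x mod int n)"
    using assms(1) unfolding hits_def by blast
  have m: "(M - y, M - x) \<in> prs M \<alpha> \<delta> \<epsilon> \<xi>" by (rule prs_refl[OF h(3)])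
  from h(4) have "(V (k-1) mod int n = (M - x) mod int n \<and> V k mod int n = (M - y) mod int n) \<or>
     (V (k-1) mod int n = (M - y) mod int n \<and> V k mod int n = (M - x) mod int n)"
    using mod_refl[OF _ assms(2)] by blast
  then show ?thesis unfolding hits_def using h(1,2) m by blast
qed

lemma core0:
  fixes A B :: "nat \<Rightarrow> int" and M :: int
  assumes c: "cond M \<alpha> \<delta> \<epsilon> \<xi>" and nM: "int n = 2*M - 1"
    and L: "lp n A B D" and nh: "\<not> hits n (prs M \<alpha> \<delta> \<epsilon> \<xi>) (VV A B D)"
    and A0: "M - int \<delta> \<le> A 0" "A 0 \<le> int n + int \<alpha>"
  shows False
proof -
  define N where "N = int n"
  have ad: "int \<alpha> + int \<delta> \<le> M - 2" using c unfolding cond_def by blast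
  have n3: "n \<ge> 3" using nM ad by linarith
  have AB0: "A 0 = B 0" using L unfolding lp_def by blast
  let ?V = "VV A B D" and ?P = "prs M \<alpha> \<delta> \<epsilon> \<xi>"
  have fd: "B (n-1) - A (n-1) = N - 1" using lp_diff[OF L, of "n-1"] n3 unfolding N_def by simp
  show False
  proof (cases "B (n-1) \<ge> N + M - int \<delta> - 1")
    case True
    then show False using case1[OF c nM L nh A0(2)] unfolding N_def by simp
  next
    case nB: False
    show False
    proof (cases "A (n-1) \<le> int \<alpha> + 1")
      case True
      define cc where "cc = N + M"
      let ?A = "\<lambda>k. cc - B k" and ?B = "\<lambda>k. cc - A k" and ?D = "\<lambda>k. \<not> D k"
      have L': "lp n ?A ?B ?D" by (rule lp_refl[OF L])
      have V': "VV ?A ?B ?D = (\<lambda>k. cc - ?V k)" by (rule VV_refl0[of A B cc D, OF AB0])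
      have nh': "\<not> hits n (prs M \<delta> \<alpha> \<xi> \<epsilon>) (VV ?A ?B ?D)"
      proof
        assume "hits n (prs M \<delta> \<alpha> \<xi> \<epsilon>) (VV ?A ?B ?D)"
        then have h: "hits n (prs M \<delta> \<alpha> \<xi> \<epsilon>) (\<lambda>k. cc - ?V k)" unfolding V' .
        have "hits n ?P ?V" by (rule hits_refl[OF h]) (simp add: cc_def N_def)
        then show False using nh by simp
      qed
      show False
        by (rule case1[OF cond_refl[OF c] nM L' nh']) (use A0 AB0 True in \<open>auto simp: cc_def N_def\<close>)
    next
      case nA: False
      have Af: "int \<alpha> + 2 \<le> A (n-1)" "A (n-1) \<le> M - int \<delta> - 1" using nA nB fd by auto
      have k0: "0 < n - 1" "n - 1 < n" using n3 by auto
      have k1: "0 < n - 2" "n - 2 < n" using n3 by auto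
      have nn: "n - 1 - 1 = n - 2" "Suc (n - 2) = n - 1" using n3 by auto
      have "hits n ?P ?V"
      proof (cases "D (n-1)")
        case True
        have s1: "A (n-1) = A (n-2) \<and> B (n-1) = B (n-2) + 1" using lp_step(1)[OF L k0 True] nn by simp
        have v1: "?V (n-1) = B (n-1)" using VV_simps(2)[of "n-1" D A B] k0 True by simp
        show ?thesis
        proof (cases "D (n-2)")
          case True
          have "?V (n-2) = B (n-2)" using VV_simps(2)[of "n-2" D A B] k1 True by simp
          then show ?thesis
            by (intro gap_hit[OF k0, of \<alpha> "B (n-1) - 1 - N" M \<delta> ?V 1 1]) (use v1 s1 fd Af nn in \<open>auto simp: N_def\<close>)
        next
          case False
          have "?V (n-2) = A (n-2)" using VV_simps(3)[of "n-2" D A B] k1 False by simp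
          then show ?thesis
            by (intro gap_hit[OF k0, of \<alpha> "A (n-1) - 1" M \<delta> ?V 0 1]) (use v1 s1 fd Af nn in \<open>auto simp: N_def\<close>)
        qed
      next
        case False
        have s1: "A (n-1) = A (n-2) - 1 \<and> B (n-1) = B (n-2)" using lp_step(2)[OF L k0 False] nn by simp
        have v1: "?V (n-1) = A (n-1)" using VV_simps(3)[of "n-1" D A B] k0 False by simp
        show ?thesis
        proof (cases "D (n-2)")
          case True
          have "?V (n-2) = B (n-2)" using VV_simps(2)[of "n-2" D A B] k1 True by simp
          then show ?thesis
            by (intro gap_hit[OF k0, of \<alpha> "A (n-1) - 1" M \<delta> ?V 1 0]) (use v1 s1 fd Af nn in \<open>auto simp: N_def\<close>)
        next
          case False
          have "?V (n-2) = A (n-2)" using VV_simps(3)[of "n-2" D A B] k1 False by simp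
          then show ?thesis
            by (intro gap_hit[OF k0, of \<alpha> "A (n-1)" M \<delta> ?V 0 0]) (use v1 s1 fd Af nn in \<open>auto simp: N_def\<close>)
        qed
      qed
      then show False using nh by simp
    qed
  qed
qed

lemma core:
  fixes A B :: "nat \<Rightarrow> int" and M :: int
  assumes c: "cond M \<alpha> \<delta> \<epsilon> \<xi>" and nM: "int n = 2*M - 1" and L: "lp n A B D"
  shows "hits n (prs M \<alpha> \<delta> \<epsilon> \<xi>) (VV A B D)"
proof (rule ccontr)
  assume nh: "\<not> hits n (prs M \<alpha> \<delta> \<epsilon> \<xi>) (VV A B D)"
  define N where "N = int n"
  have ad: "int \<alpha> + int \<delta> \<le> M - 2" using c unfolding cond_def by blast
  have n3: "n \<ge> 3" using nM ad by linarith
  have AB0: "A 0 = B 0" using L unfolding lp_def by blast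
  let ?V = "VV A B D" and ?P = "prs M \<alpha> \<delta> \<epsilon> \<xi>"
  define v where "v = A 0"
  define r where "r = v mod N"
  define q where "q = v div N"
  have vr: "v = r + N * q" unfolding r_def q_def by simp
  have r0: "0 \<le> r" "r < N" unfolding r_def using n3 N_def by auto
  have k1: "0 < (1::nat)" "1 < n" using n3 by auto
  have shifted: False if sh: "M - int \<delta> \<le> v + N * q'" "v + N * q' \<le> N + int \<alpha>" for q'
  proof -
    let ?A = "\<lambda>k. A k + N * q'" and ?B = "\<lambda>k. B k + N * q'"
    have L': "lp n ?A ?B D" by (rule lp_shift[OF L])
    have V': "VV ?A ?B D = (\<lambda>k. ?V k + int n * q')" unfolding VV_shift N_def by simp
    have nh': "\<not> hits n ?P (VV ?A ?B D)" using nh hits_shift unfolding V' by blast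
    show False by (rule core0[OF c nM L' nh']) (use sh in \<open>auto simp: v_def N_def\<close>)
  qed
  show False
  proof (cases "int \<alpha> + 1 \<le> r \<and> r \<le> M - int \<delta> - 1")
    case True
    have V0: "?V 0 = v" unfolding v_def by (simp add: VV_simps)
    have "hits n ?P ?V"
    proof (cases "D 1")
      case True
      have "?V 1 = v + 1" using VV_simps(2)[of 1 D A B] lp_step(1)[OF L k1 True] AB0 True unfolding v_def by simp
      then show ?thesis
        by (intro gap_hit[OF k1, of \<alpha> r M \<delta> ?V q q]) (use V0 vr \<open>int \<alpha> + 1 \<le> r \<and> r \<le> M - int \<delta> - 1\<close> in \<open>auto simp: N_def\<close>)
    next
      case False
      have "?V 1 = v - 1" using VV_simps(3)[of 1 D A B] lp_step(2)[OF L k1 False] False unfolding v_def by simp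
      then show ?thesis
        by (intro gap_hit[OF k1, of \<alpha> "r - 1" M \<delta> ?V q q]) (use V0 vr \<open>int \<alpha> + 1 \<le> r \<and> r \<le> M - int \<delta> - 1\<close> in \<open>auto simp: N_def\<close>)
    qed
    then show False using nh by simp
  next
    case False
    then have "r \<le> int \<alpha> \<or> M - int \<delta> \<le> r" by auto
    then show False
    proof
      assume "r \<le> int \<alpha>"
      then show False using shifted[of "1 - q"] vr r0 nM ad unfolding N_def by (auto simp: algebra_simps)
    next
      assume "M - int \<delta> \<le> r"
      then show False using shifted[of "- q"] vr r0 nM ad unfolding N_def by (auto simp: algebra_simps)
    qed
  qed
qed

definition BA :: "nat \<Rightarrow> int \<Rightarrow> int \<Rightarrow> nat \<Rightarrow> nat \<Rightarrow> (nat \<Rightarrow> int) \<Rightarrow> (nat \<Rightarrow> int) \<Rightarrow> nat set set" where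
  "BA n k M \<alpha> \<delta> \<epsilon> \<xi> = {redge n k i (i + 1) | i. int \<alpha> \<le> i \<and> i < M - int \<delta>}
       \<union> {redge n k (int i - 1 - \<epsilon> i) (int i + \<epsilon> i) | i. 1 \<le> i \<and> i \<le> \<alpha>}
       \<union> {redge n k (M - int j - \<xi> j) (M - int j + 1 + \<xi> j) | j. 1 \<le> j \<and> j \<le> \<delta>}"

lemma classA_BA:
  assumes "classA m B"
  shows "\<exists>k \<alpha> \<delta> \<epsilon> \<xi>. cond (int m) \<alpha> \<delta> \<epsilon> \<xi> \<and> B = BA (2*m-1) k (int m) \<alpha> \<delta> \<epsilon> \<xi>"
  using assms unfolding classA_def cond_def BA_def Let_def
  apply (elim exE conjE)
  apply (intro exI conjI)
  apply assumption+
  done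

lemma prs_BA: "(x,y) \<in> prs M \<alpha> \<delta> \<epsilon> \<xi> \<Longrightarrow> redge n k x y \<in> BA n k M \<alpha> \<delta> \<epsilon> \<xi>"
  unfolding prs_def BA_def by blast

lemma redge_cong:
  assumes "u mod int n = x mod int n" "v mod int n = y mod int n"
  shows "{md n (u + k), md n (v + k)} = redge n k x y"
proof -
  have "(u + k) mod int n = (x + k) mod int n" "(v + k) mod int n = (y + k) mod int n"
    using assms by (metis mod_add_left_eq)+
  then show ?thesis unfolding redge_def md_def by simp
qed

lemma hitsA:
  assumes c: "cond M \<alpha> \<delta> \<epsilon> \<xi>" and nM: "int n = 2*M - 1" and shp: "is_SHP n p"
  shows "BA n k M \<alpha> \<delta> \<epsilon> \<xi> \<inter> path_edges p \<noteq> {}"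
proof -
  obtain A B D where L: "lp n A B D" and pv: "\<forall>j<n. p!j = md n (VV A B D j)"
    using SHP_lp[OF shp] by blast
  let ?A = "\<lambda>j. A j + (- k)" and ?B = "\<lambda>j. B j + (- k)"
  have L': "lp n ?A ?B D" by (rule lp_shift[OF L])
  have V': "VV ?A ?B D = (\<lambda>j. VV A B D j + (- k))" by (rule VV_shift)
  have "hits n (prs M \<alpha> \<delta> \<epsilon> \<xi>) (VV ?A ?B D)" by (rule core[OF c nM L'])
  then obtain j x y where h: "0 < j" "j < n" "(x,y) \<in> prs M \<alpha> \<delta> \<epsilon> \<xi>"
    "((VV A B D (j-1) - k) mod int n = x mod int n \<and> (VV A B D j - k) mod int n = y mod int n) \<or>
     ((VV A B D (j-1) - k) mod int n = y mod int n \<and> (VV A B D j - k) mod int n = x mod int n)"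
    unfolding hits_def V' by auto
  have pe: "{p!(j-1), p!j} \<in> path_edges p"
  proof -
    have "Suc (j-1) < length p" using h shp_basic(2)[OF shp] by simp
    then have "{p!(j-1), p!Suc (j-1)} \<in> path_edges p" unfolding path_edges_def by blast
    then show ?thesis using h by simp
  qed
  have pj: "p!(j-1) = md n ((VV A B D (j-1) - k) + k)" "p!j = md n ((VV A B D j - k) + k)"
    using pv h by auto
  have "{p!(j-1), p!j} = redge n k x y"
    using h(4)
  proof
    assume a: "(VV A B D (j-1) - k) mod int n = x mod int n \<and> (VV A B D j - k) mod int n = y mod int n"
    show ?thesis unfolding pj by (rule redge_cong) (use a in auto)
  next
    assume a: "(VV A B D (j-1) - k) mod int n = y mod int n \<and> (VV A B D j - k) mod int n = x mod int n"
    have "{p!j, p!(j-1)} = redge n k x y" unfolding pj by (rule redge_cong) (use a in auto)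
    then show ?thesis by (simp add: insert_commute)
  qed
  then have "redge n k x y \<in> BA n k M \<alpha> \<delta> \<epsilon> \<xi> \<inter> path_edges p" using pe prs_BA[OF h(3)] by simp
  then show ?thesis by blast
qed

lemma mod_ne:
  fixes z d :: int and n :: nat
  assumes "0 < d" "d < int n"
  shows "nat ((z + d) mod int n) \<noteq> nat (z mod int n)"
proof
  assume "nat ((z + d) mod int n) = nat (z mod int n)"
  then have "(z + d) mod int n = z mod int n" using assms by (simp add: eq_nat_nat_iff)
  then have "int n dvd d" by (metis add_diff_cancel_left' mod_eq_dvd_iff)
  then show False using assms zdvd_imp_le by fastforce
qed

lemma redge_ck:
  assumes "0 < y - x" "y - x < int n"
  shows "redge n k x y \<in> ck_edges n"
proof -
  have n0: "int n > 0" using assms by simp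
  have "nat ((x + k + (y - x)) mod int n) \<noteq> nat ((x + k) mod int n)" by (rule mod_ne) (use assms in auto)
  moreover have "x + k + (y - x) = y + k" by simp
  ultimately have ne: "nat ((x + k) mod int n) \<noteq> nat ((y + k) mod int n)" by simp
  have "nat ((x + k) mod int n) < n" "nat ((y + k) mod int n) < n" using n0 by (simp_all add: nat_less_iff)
  then show ?thesis unfolding redge_def ck_edges_def using ne by blast
qed

lemma BA_ck:
  assumes c: "cond M \<alpha> \<delta> \<epsilon> \<xi>" and nM: "int n = 2*M - 1"
  shows "BA n k M \<alpha> \<delta> \<epsilon> \<xi> \<subseteq> ck_edges n"
proof -
  note cd = c[unfolded cond_def]
  have ad: "int \<alpha> + int \<delta> \<le> M - 2" using cd by blast
  have eb: "\<And>i. 1 \<le> i \<Longrightarrow> i \<le> \<alpha> \<Longrightarrow> 0 < \<epsilon> i \<and> int \<alpha> - int i + 1 \<le> \<epsilon> i \<and> \<epsilon> i \<le> M - int \<delta> - int i - 1"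
    using cd by blast
  have xb: "\<And>j. 1 \<le> j \<Longrightarrow> j \<le> \<delta> \<Longrightarrow> 0 < \<xi> j \<and> int \<delta> + 1 - int j \<le> \<xi> j \<and> \<xi> j \<le> M - int j - int \<alpha> - 1"
    using cd by blast
  show ?thesis unfolding BA_def
  proof (intro Un_least subsetI)
    fix e assume "e \<in> {redge n k i (i + 1) | i. int \<alpha> \<le> i \<and> i < M - int \<delta>}"
    then obtain i where i: "e = redge n k i (i+1)" by blast
    have "redge n k i (i+1) \<in> ck_edges n" by (rule redge_ck) (use nM ad in auto)
    then show "e \<in> ck_edges n" using i by simp
  next
    fix e assume "e \<in> {redge n k (int i - 1 - \<epsilon> i) (int i + \<epsilon> i) | i. 1 \<le> i \<and> i \<le> \<alpha>}"
    then obtain i where i: "e = redge n k (int i - 1 - \<epsilon> i) (int i + \<epsilon> i)" "1 \<le> i" "i \<le> \<alpha>" by blast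
    have "redge n k (int i - 1 - \<epsilon> i) (int i + \<epsilon> i) \<in> ck_edges n" by (rule redge_ck) (use nM eb[OF i(2,3)] i(2) in auto)
    then show "e \<in> ck_edges n" using i by simp
  next
    fix e assume "e \<in> {redge n k (M - int j - \<xi> j) (M - int j + 1 + \<xi> j) | j. 1 \<le> j \<and> j \<le> \<delta>}"
    then obtain j where j: "e = redge n k (M - int j - \<xi> j) (M - int j + 1 + \<xi> j)" "1 \<le> j" "j \<le> \<delta>" by blast
    have "redge n k (M - int j - \<xi> j) (M - int j + 1 + \<xi> j) \<in> ck_edges n" by (rule redge_ck) (use nM xb[OF j(2,3)] j(2) in auto)
    then show "e \<in> ck_edges n" using j by simp
  qed
qed

lemma BA_card:
  assumes c: "cond M \<alpha> \<delta> \<epsilon> \<xi>"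
  shows "card (BA n k M \<alpha> \<delta> \<epsilon> \<xi>) \<le> nat M"
proof -
  have ad: "int \<alpha> + int \<delta> \<le> M - 2" using c unfolding cond_def by blast
  have e1: "{redge n k i (i + 1) | i. int \<alpha> \<le> i \<and> i < M - int \<delta>} = (\<lambda>i. redge n k i (i+1)) ` {int \<alpha>..<M - int \<delta>}"
    by auto
  have e2: "{redge n k (int i - 1 - \<epsilon> i) (int i + \<epsilon> i) | i. 1 \<le> i \<and> i \<le> \<alpha>} = (\<lambda>i. redge n k (int i - 1 - \<epsilon> i) (int i + \<epsilon> i)) ` {1..\<alpha>}"
    by auto
  have e3: "{redge n k (M - int j - \<xi> j) (M - int j + 1 + \<xi> j) | j. 1 \<le> j \<and> j \<le> \<delta>} = (\<lambda>j. redge n k (M - int j - \<xi> j) (M - int j + 1 + \<xi> j)) ` {1..\<delta>}"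
    by auto
  have "card (BA n k M \<alpha> \<delta> \<epsilon> \<xi>) \<le> card {int \<alpha>..<M - int \<delta>} + card {1..\<alpha>} + card {1..\<delta>}"
  proof -
    let ?f1 = "\<lambda>i. redge n k i (i+1)" and ?f2 = "\<lambda>i. redge n k (int i - 1 - \<epsilon> i) (int i + \<epsilon> i)"
      and ?f3 = "\<lambda>j. redge n k (M - int j - \<xi> j) (M - int j + 1 + \<xi> j)"
    have c1: "card (?f1 ` {int \<alpha>..<M - int \<delta>}) \<le> card {int \<alpha>..<M - int \<delta>}" by (rule card_image_le) simp
    have c2: "card (?f2 ` {1..\<alpha>}) \<le> card {1..\<alpha>}" by (rule card_image_le) simp
    have c3: "card (?f3 ` {1..\<delta>}) \<le> card {1..\<delta>}" by (rule card_image_le) simp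
    have "card (?f1 ` {int \<alpha>..<M - int \<delta>} \<union> ?f2 ` {1..\<alpha>} \<union> ?f3 ` {1..\<delta>})
       \<le> card (?f1 ` {int \<alpha>..<M - int \<delta>} \<union> ?f2 ` {1..\<alpha>}) + card (?f3 ` {1..\<delta>})" by (rule card_Un_le)
    also have "\<dots> \<le> card (?f1 ` {int \<alpha>..<M - int \<delta>}) + card (?f2 ` {1..\<alpha>}) + card (?f3 ` {1..\<delta>})"
      using card_Un_le by simp
    finally show ?thesis unfolding BA_def e1 e2 e3 using c1 c2 c3 by linarith
  qed
  also have "\<dots> = nat M" using ad by simp
  finally show ?thesis .
qed

definition zc :: "nat \<Rightarrow> int" where "zc j = (if even j then - int (j div 2) else int (j div 2) + 1)"
definition zz :: "nat \<Rightarrow> nat \<Rightarrow> nat list" where "zz n k = map (\<lambda>j. md n (int k + zc j)) [0..<n]"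

lemma zc_inj: "zc j = zc j' \<Longrightarrow> j = j'"
  unfolding zc_def by (auto split: if_splits) presburger+

lemma zc_bounds: "j + 1 < 2 * m \<Longrightarrow> 1 - int m \<le> zc j \<and> zc j \<le> int m - 1"
  unfolding zc_def by (auto; presburger)

lemma zc_lo: "min (zc j) (zc (Suc j)) = - int ((j+1) div 2)"
  unfolding zc_def by (auto; presburger)

lemma zc_hi: "max (zc j) (zc (Suc j)) = int (j div 2) + 1"
  unfolding zc_def by (auto; presburger)

lemma zc_sum: "zc j + zc (Suc j) = (if even j then 1 else 0)"
  unfolding zc_def by (auto; presburger)

lemma set_min_max: "{f a, f b} = {f (min a b), f (max a b)}" for a b :: int
  by (cases "a \<le> (b::int)") (auto simp: min_def max_def)

lemma zz_nth: "j < n \<Longrightarrow> zz n k ! j = md n (int k + zc j)"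
  unfolding zz_def by simp

lemma zz_len: "length (zz n k) = n" unfolding zz_def by simp

lemma zz_edge: "Suc j < n \<Longrightarrow> {zz n k ! j, zz n k ! Suc j} =
    {md n (int k - int ((j+1) div 2)), md n (int k + int (j div 2) + 1)}"
proof -
  assume "Suc j < n"
  then have "{zz n k ! j, zz n k ! Suc j} = {md n (int k + zc j), md n (int k + zc (Suc j))}"
    by (simp add: zz_nth)
  also have "\<dots> = {md n (min (int k + zc j) (int k + zc (Suc j))), md n (max (int k + zc j) (int k + zc (Suc j)))}"
    by (rule set_min_max)
  also have "min (int k + zc j) (int k + zc (Suc j)) = int k + min (zc j) (zc (Suc j))" by (simp add: min_def)
  also have "max (int k + zc j) (int k + zc (Suc j)) = int k + max (zc j) (zc (Suc j))" by (simp add: max_def)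
  finally show ?thesis unfolding zc_lo zc_hi by (simp add: algebra_simps)
qed

lemma zz_nocross:
  assumes "Suc j < n" "Suc j' < n" "j \<le> j'"
  shows "\<not> crosses {zz n k ! j', zz n k ! Suc j'} {zz n k ! j, zz n k ! Suc j}"
proof -
  have "\<not> crosses {md n (int k - int ((j'+1) div 2)), md n (int k + int (j' div 2) + 1)}
                  {md n (int k - int ((j+1) div 2)), md n (int k + int (j div 2) + 1)}"
  proof (rule nest_nocross)
    show "int k - int ((j'+1) div 2) \<le> int k - int ((j+1) div 2)" using assms(3) by (simp add: div_le_mono)
    show "int k - int ((j+1) div 2) < int k + int (j div 2) + 1" by simp
    show "int k + int (j div 2) + 1 \<le> int k + int (j' div 2) + 1" using assms(3) by (simp add: div_le_mono)
    show "int k + int (j' div 2) + 1 < int k - int ((j'+1) div 2) + int n" using assms(2) by linarith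
  qed
  then show ?thesis using zz_edge assms by simp
qed

lemma zz_SHP:
  assumes nm: "n = 2 * m - 1" "m \<ge> 1" and kn: "k < n"
  shows "is_SHP n (zz n k)"
proof -
  have n0: "n > 0" using nm by simp
  have win: "int k + 1 - int m \<le> int k + zc j \<and> int k + zc j < int k + 1 - int m + int n" if "j < n" for j
    using zc_bounds[of j m] that nm by auto
  have dist: "distinct (zz n k)" unfolding zz_def distinct_map
  proof
    show "inj_on (\<lambda>j. md n (int k + zc j)) (set [0..<n])"
    proof (rule inj_onI)
      fix j j' assume jj: "j \<in> set [0..<n]" "j' \<in> set [0..<n]" "md n (int k + zc j) = md n (int k + zc j')"
      have "int k + zc j = int k + zc j'"
        by (rule md_inj_window[where w="int k + 1 - int m", OF _ _ _ _ jj(3)]) (use win jj in auto)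
      then show "j = j'" using zc_inj by simp
    qed
  qed simp
  have sub: "set (zz n k) \<subseteq> {0..<n}" unfolding zz_def using md_lt[OF n0] by auto
  have "card (set (zz n k)) = n" using distinct_card[OF dist] zz_len by simp
  then have st: "set (zz n k) = {0..<n}" using card_subset_eq[OF _ sub] by simp
  have nc: "\<forall>e \<in> path_edges (zz n k). \<forall>f \<in> path_edges (zz n k). \<not> crosses e f"
  proof (intro ballI)
    fix e f assume ef: "e \<in> path_edges (zz n k)" "f \<in> path_edges (zz n k)"
    obtain j where j: "e = {zz n k ! j, zz n k ! Suc j}" "Suc j < n" using ef(1) zz_len unfolding path_edges_def by auto
    obtain j' where j': "f = {zz n k ! j', zz n k ! Suc j'}" "Suc j' < n" using ef(2) zz_len unfolding path_edges_def by auto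
    show "\<not> crosses e f"
    proof (cases "j \<le> j'")
      case True
      then show ?thesis using zz_nocross[OF j(2) j'(2) True] crosses_sym j j' by metis
    next
      case False
      then show ?thesis using zz_nocross[OF j'(2) j(2)] j j' by simp
    qed
  qed
  show ?thesis unfolding is_SHP_def using dist st nc by blast
qed

lemma odd_dvd2:
  fixes x :: int
  assumes "odd n" "int n dvd 2 * x"
  shows "int n dvd x"
proof -
  obtain q where q: "2 * x = int n * q" using assms(2) by (auto simp: dvd_def)
  have "even (int n * q)" using q by (metis dvd_triv_left)
  moreover have "odd (int n)" using assms(1) by simp
  ultimately have "even q" by simp
  then obtain q' where "q = 2 * q'" by (auto elim: evenE)
  then have "x = int n * q'" using q by simp
  then show ?thesis by simp
qed

lemma sum2: "a \<noteq> b \<Longrightarrow> \<Sum>{a, b::nat} = a + b" by simp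

lemma zz_sum:
  assumes shp: "is_SHP n (zz n k)" and j: "Suc j < n"
  shows "int (\<Sum>{zz n k ! j, zz n k ! Suc j}) mod int n = (2 * int k + (if even j then 1 else 0)) mod int n"
proof -
  have ne: "zz n k ! j \<noteq> zz n k ! Suc j"
    using shp_basic(1)[OF shp] zz_len j nth_eq_iff_index_eq[of "zz n k" j "Suc j"] by simp
  have "int (\<Sum>{zz n k ! j, zz n k ! Suc j}) = int (zz n k ! j) + int (zz n k ! Suc j)" using sum2[OF ne] by simp
  also have "\<dots> = (int k + zc j) mod int n + (int k + zc (Suc j)) mod int n"
    using j by (simp add: zz_nth md_def)
  finally have "int (\<Sum>{zz n k ! j, zz n k ! Suc j}) mod int n = (int k + zc j + (int k + zc (Suc j))) mod int n"
    by (simp add: mod_add_eq)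
  also have "int k + zc j + (int k + zc (Suc j)) = 2 * int k + (zc j + zc (Suc j))" by simp
  finally show ?thesis unfolding zc_sum by simp
qed

lemma lower_bound:
  assumes nm: "n = 2 * m - 1" "m \<ge> 1" and sub: "B' \<subseteq> ck_edges n" and hit: "hits_all_SHP n B'"
  shows "m \<le> card B'"
proof -
  have n0: "n > 0" and on: "odd n" using nm by auto
  have fin: "finite B'"
  proof (rule finite_subset[OF sub])
    show "finite (ck_edges n)"
      by (rule finite_subset[of _ "Pow {0..<n}"]) (auto simp: ck_edges_def)
  qed
  have ex: "\<exists>e. e \<in> B' \<and> e \<in> path_edges (zz n k)" if "k < n" for k
    using hit zz_SHP[OF nm that] unfolding hits_all_SHP_def by blast
  define ee where "ee = (\<lambda>k. SOME e. e \<in> B' \<and> e \<in> path_edges (zz n k))"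
  have eep: "ee k \<in> B' \<and> ee k \<in> path_edges (zz n k)" if "k < n" for k
    unfolding ee_def by (rule someI_ex[OF ex[OF that]])
  have es: "int (\<Sum>(ee k)) mod int n = (2 * int k) mod int n \<or> int (\<Sum>(ee k)) mod int n = (2 * int k + 1) mod int n"
    if kn: "k < n" for k
  proof -
    obtain j where j: "ee k = {zz n k ! j, zz n k ! Suc j}" "Suc j < n"
      using eep[OF kn] zz_len unfolding path_edges_def by auto
    show ?thesis using zz_sum[OF zz_SHP[OF nm kn] j(2)] j(1) by (cases "even j") auto
  qed
  define f where "f = (\<lambda>k. (ee k, int (\<Sum>(ee k)) mod int n = (2 * int k) mod int n))"
  have inj: "inj_on f {0..<n}"
  proof (rule inj_onI)
    fix k1 k2 assume k: "k1 \<in> {0..<n}" "k2 \<in> {0..<n}" "f k1 = f k2"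
    have e: "ee k1 = ee k2" and b: "(int (\<Sum>(ee k1)) mod int n = (2 * int k1) mod int n) =
       (int (\<Sum>(ee k2)) mod int n = (2 * int k2) mod int n)" using k(3) unfolding f_def by auto
    have "(2 * int k1) mod int n = (2 * int k2) mod int n"
    proof (cases "int (\<Sum>(ee k1)) mod int n = (2 * int k1) mod int n")
      case True
      then show ?thesis using b e by simp
    next
      case False
      then have "int (\<Sum>(ee k1)) mod int n = (2 * int k1 + 1) mod int n"
        "int (\<Sum>(ee k2)) mod int n = (2 * int k2 + 1) mod int n" using es k b by auto
      then have "(2 * int k1 + 1) mod int n = (2 * int k2 + 1) mod int n" using e by simp
      then have "int n dvd (2 * int k1 + 1) - (2 * int k2 + 1)" by (simp add: mod_eq_dvd_iff)
      then have "int n dvd (2 * int k1) - (2 * int k2)" by simp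
      then show ?thesis by (simp add: mod_eq_dvd_iff)
    qed
    then have "int n dvd 2 * (int k1 - int k2)" by (simp add: mod_eq_dvd_iff algebra_simps)
    then have "int n dvd (int k1 - int k2)" by (rule odd_dvd2[OF on])
    then have "int k1 mod int n = int k2 mod int n" by (simp add: mod_eq_dvd_iff)
    then show "k1 = k2" using k by simp
  qed
  have img: "f ` {0..<n} \<subseteq> B' \<times> (UNIV :: bool set)" using eep unfolding f_def by auto
  have "n = card (f ` {0..<n})" using card_image[OF inj] by simp
  also have "\<dots> \<le> card (B' \<times> (UNIV :: bool set))"
    by (rule card_mono[OF _ img]) (use fin in simp)
  also have "\<dots> = 2 * card B'" by (simp add: card_cartesian_product)
  finally show ?thesis using nm by simp
qed

theorem theorem1:
  fixes m :: nat and B :: "nat set set"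
  assumes "m \<ge> 2" and "classA m B"
  shows "SHP_blocker (2 * m - 1) B"
proof -
  obtain k \<alpha> \<delta> \<epsilon> \<xi> where c: "cond (int m) \<alpha> \<delta> \<epsilon> \<xi>" and B: "B = BA (2*m-1) k (int m) \<alpha> \<delta> \<epsilon> \<xi>"
    using classA_BA[OF assms(2)] by blast
  have nM: "int (2*m-1) = 2 * int m - 1" using assms(1) by simp
  have sub: "B \<subseteq> ck_edges (2*m-1)" unfolding B by (rule BA_ck[OF c nM])
  have hit: "hits_all_SHP (2*m-1) B" unfolding hits_all_SHP_def B using hitsA[OF c nM] by blast
  have cb: "card B \<le> m" using BA_card[OF c, of "2*m-1" k] unfolding B by simp
  have mn: "\<forall>B'. B' \<subseteq> ck_edges (2*m-1) \<and> hits_all_SHP (2*m-1) B' \<longrightarrow> card B \<le> card B'"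
  proof (intro allI impI)
    fix B' assume h: "B' \<subseteq> ck_edges (2*m-1) \<and> hits_all_SHP (2*m-1) B'"
    have "m \<le> card B'" by (rule lower_bound[of "2*m-1" m]) (use h assms(1) in auto)
    then show "card B \<le> card B'" using cb by simp
  qed
  show ?thesis unfolding SHP_blocker_def using sub hit mn by blast
qed

end
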